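(* Let $\mathcal{H}$ be a Hilbert space, let $W=(W(h))_{h\in\mathcal{H}}$ be an isonormal Gaussian process on $\mathcal{H}$, and let $\mathcal{F}\subset\mathcal{H}$. Then for all $\delta\geq 0$, \[ \omega(\mathrm{conv}(\mathcal{F}),\delta)\leq \inf_{\varepsilon>0}\left(2\,\omega(\mathcal{F},\varepsilon)+\delta\sqrt{N(\mathcal{F},\varepsilon)}\right), \] where $\mathrm{conv}(\mathcal{F})$ denotes the convex hull of $\mathcal{F}$.
   Context: An isonormal Gaussian process on $\mathcal{H}$ is a family $(W(h))_{h\in\mathcal{H}}$ of centered jointly Gaussian random variables with $\mathbb{E}[W(h)W(h')]=\langle h,h'\rangle_{\mathcal{H}}$ for all $h,h'\in\mathcal{H}$. For $A\subset\mathcal{H}$ and $\delta\geq0$, the modulus of continuity is $\omega(A,\delta)=\mathbb{E}\Big[\sup_{f,g\in A,\ \|f-g\|\leq\delta}|W(f)-W(g)|\Big]$. For $\varepsilon>0$, $N(A,\varepsilon)$ is the $\varepsilon$-covering number of $A$: the minimal cardinality of a subset $A_\varepsilon\subset A$ such that $A$ is contained in the union of the closed balls of radius $\varepsilon$ centered at points of $A_\varepsilon$. *)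

theory Defs
  imports "HOL-Probability.Probability"
begin

definition centered_gaussian :: "'a measure \<Rightarrow> ('a \<Rightarrow> real) \<Rightarrow> bool" where
  "centered_gaussian M X \<longleftrightarrow> X \<in> borel_measurable M \<and>
     ((AE x in M. X x = 0) \<or> (\<exists>\<sigma>>0. distributed M lborel X (normal_density 0 \<sigma>)))"

text \<open>Isonormal Gaussian process: centered, jointly Gaussian (every finite linear
  combination is a centered Gaussian), with covariance given by the inner product.\<close>
definition isonormal :: "'a measure \<Rightarrow> ('h::real_inner \<Rightarrow> 'a \<Rightarrow> real) \<Rightarrow> bool" where
  "isonormal M W \<longleftrightarrow>
     (\<forall>(n::nat) (h::nat \<Rightarrow> 'h) (c::nat \<Rightarrow> real).
        centered_gaussian M (\<lambda>x. \<Sum>i<n. c i * W (h i) x)) \<and>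
     (\<forall>h h'. integral\<^sup>L M (\<lambda>x. W h x * W h' x) = inner h h')"

text \<open>Modulus of continuity. The expectation of the supremum of the (possibly
  uncountable) family is taken in the standard lattice sense:
  E sup_{t in T} X_t := sup over finite S of E max_{t in S} X_t.\<close>
definition modulus :: "'a measure \<Rightarrow> ('h::real_normed_vector \<Rightarrow> 'a \<Rightarrow> real) \<Rightarrow> 'h set \<Rightarrow> real \<Rightarrow> ennreal" where
  "modulus M W A \<delta> =
     (SUP S \<in> {S. finite S \<and> S \<subseteq> {(f, g). f \<in> A \<and> g \<in> A \<and> norm (f - g) \<le> \<delta>}}.
        \<integral>\<^sup>+ x. (SUP p \<in> S. ennreal \<bar>W (fst p) x - W (snd p) x\<bar>) \<partial>M)"

text \<open>Covering number (centers in A, closed balls); \<infinity> if no finite cover exists.\<close>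
definition covering_number :: "'h::metric_space set \<Rightarrow> real \<Rightarrow> ennreal" where
  "covering_number A \<epsilon> =
     (INF C \<in> {C. finite C \<and> C \<subseteq> A \<and> A \<subseteq> (\<Union>c\<in>C. cball c \<epsilon>)}. of_nat (card C))"

definition ennsqrt :: "ennreal \<Rightarrow> ennreal" where
  "ennsqrt x = (if x = \<infinity> then \<infinity> else ennreal (sqrt (enn2real x)))"

end

theory Submission
  imports Defs
begin


lemma iexp_eq_cis: "iexp y = cis y"
  by (simp add: cis_conv_exp)
lemma iexp_cos: "complex_of_real (cos x) = (iexp x + iexp (- x)) / 2"
  by (simp only: iexp_eq_cis) (simp add: complex_eq_iff)
lemma iexp_sin: "complex_of_real (sin x) = (iexp x - iexp (- x)) / (2 * \<i>)"
  by (simp only: iexp_eq_cis) (simp add: complex_eq_iff)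
lemma iexp_split: "iexp x = complex_of_real (1 + cos x) - 1 + \<i> * (complex_of_real (1 + sin x) - 1)"
  by (simp add: cis_conv_exp[symmetric] complex_eq_iff)

lemma sum_upd_split:
  assumes "k < n"
  shows "(\<Sum>j\<in>{k..<n}. (t(k:=s)) j * Z j) = s * Z k + (\<Sum>j\<in>{Suc k..<n}. t j * Z j)"
proof -
  have "(\<Sum>j\<in>{k..<n}. (t(k:=s)) j * Z j) = (t(k:=s)) k * Z k + (\<Sum>j\<in>{Suc k..<n}. (t(k:=s)) j * Z j)"
    using assms by (simp add: sum.atLeast_Suc_lessThan)
  also have "(\<Sum>j\<in>{Suc k..<n}. (t(k:=s)) j * Z j) = (\<Sum>j\<in>{Suc k..<n}. t j * Z j)"
    by (intro sum.cong) auto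
  finally show ?thesis by simp
qed

lemma int_bdd:
  fixes f :: "'a \<Rightarrow> 'b::{banach, second_countable_topology}"
  shows "prob_space M \<Longrightarrow> f \<in> borel_measurable M \<Longrightarrow> (\<And>x. norm (f x) \<le> B) \<Longrightarrow> integrable M f"
  by (metis AE_I2 finite_measure.integrable_const_bound prob_space.axioms(1))

lemma levy_weighted:
  fixes M :: "'a measure" and w w' Y Y' :: "'a \<Rightarrow> real"
  assumes P: "prob_space M"
    and mm[measurable]: "w \<in> borel_measurable M" "w' \<in> borel_measurable M"
      "Y \<in> borel_measurable M" "Y' \<in> borel_measurable M"
    and wb: "\<And>x. 0 \<le> w x \<and> w x \<le> B" "\<And>x. 0 \<le> w' x \<and> w' x \<le> B"
    and ch: "\<And>s. (CLINT x|M. complex_of_real (w x) * iexp (s * Y x))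
                 = (CLINT x|M. complex_of_real (w' x) * iexp (s * Y' x))"
    and A: "A \<in> sets borel"
  shows "(LINT x|M. w x * indicator A (Y x)) = (LINT x|M. w' x * indicator A (Y' x))"
proof -
  interpret prob_space M by (rule P)
  have iw: "integrable M w" "integrable M w'"
    by (auto intro!: integrable_const_bound[where B=B] simp: wb)
  have c: "(LINT x|M. w x) = (LINT x|M. w' x)"
    using ch[of 0] by simp
  define c where "c = (LINT x|M. w x)"
  have c0: "0 \<le> c" unfolding c_def using wb by (auto intro!: integral_nonneg_AE)
  show ?thesis
  proof (cases "c = 0")
    case True
    have "AE x in M. w x = 0"
      using integral_nonneg_eq_0_iff_AE[OF iw(1)] True wb unfolding c_def by auto
    then have 1: "(LINT x|M. w x * indicator A (Y x)) = 0"
      by (intro integral_eq_zero_AE) auto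
    have "AE x in M. w' x = 0"
      using integral_nonneg_eq_0_iff_AE[OF iw(2)] True wb c unfolding c_def by auto
    then have 2: "(LINT x|M. w' x * indicator A (Y' x)) = 0"
      by (intro integral_eq_zero_AE) auto
    show ?thesis using 1 2 by simp
  next
    case False
    then have cpos: "0 < c" using c0 by simp
    have key: "(LINT x|M. v x * indicator A (Y0 x)) = c * measure (distr (density M (\<lambda>x. ennreal (v x / c))) lborel Y0) A"
      and rd: "real_distribution (distr (density M (\<lambda>x. ennreal (v x / c))) lborel Y0)"
      and chr: "char (distr (density M (\<lambda>x. ennreal (v x / c))) lborel Y0) = (\<lambda>s. (CLINT x|M. complex_of_real (v x) * iexp (s * Y0 x)) / c)"
      if vm[measurable]: "v \<in> borel_measurable M" and Ym[measurable]: "Y0 \<in> borel_measurable M"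
        and vb: "\<And>x. 0 \<le> v x \<and> v x \<le> B" and vc: "(LINT x|M. v x) = c" for v Y0
    proof -
      let ?N = "distr (density M (\<lambda>x. ennreal (v x / c))) lborel Y0"
      have iv: "integrable M v" by (auto intro!: integrable_const_bound[where B=B] simp: vb)
      have e1: "emeasure ?N UNIV = 1"
      proof -
        have "emeasure ?N UNIV = (\<integral>\<^sup>+x. ennreal (v x / c) \<partial>M)"
          by (simp add: emeasure_distr emeasure_density)
        also have "\<dots> = ennreal (LINT x|M. v x / c)"
          using iv vb cpos by (intro nn_integral_eq_integral) auto
        also have "\<dots> = 1" using vc cpos by simp
        finally show ?thesis .
      qed
      show rd: "real_distribution ?N"
        unfolding real_distribution_def real_distribution_axioms_def
        by (auto intro!: prob_spaceI simp: e1)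
      show "char ?N = (\<lambda>s. (CLINT x|M. complex_of_real (v x) * iexp (s * Y0 x)) / c)"
      proof
        fix s
        have "char ?N s = (CLINT x|density M (\<lambda>x. ennreal (v x / c)). iexp (s * Y0 x))"
          unfolding char_def by (simp add: integral_distr)
        also have "\<dots> = (CLINT x|M. (v x / c) *\<^sub>R iexp (s * Y0 x))"
          using vb cpos by (intro integral_density) auto
        also have "\<dots> = (CLINT x|M. complex_of_real (v x) * iexp (s * Y0 x) / c)"
          by (intro Bochner_Integration.integral_cong) (auto simp: scaleR_conv_of_real)
        also have "\<dots> = (CLINT x|M. complex_of_real (v x) * iexp (s * Y0 x)) / c"
          by simp
        finally show "char ?N s = (CLINT x|M. complex_of_real (v x) * iexp (s * Y0 x)) / c" .
      qed
      have "measure ?N A = (LINT y|?N. indicator A y)"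
        using A by simp
      also have "\<dots> = (LINT x|density M (\<lambda>x. ennreal (v x / c)). indicator A (Y0 x))"
        using A by (subst integral_distr) auto
      also have "\<dots> = (LINT x|M. (v x / c) * indicator A (Y0 x))"
        using vb cpos A by (subst integral_density) auto
      also have "\<dots> = (LINT x|M. v x * indicator A (Y0 x)) / c"
        by simp
      finally show "(LINT x|M. v x * indicator A (Y0 x)) = c * measure ?N A"
        using cpos by simp
    qed
    have c': "(LINT x|M. w' x) = c" using c c_def by simp
    note k1 = key[OF mm(1) mm(3) wb(1) c_def[symmetric]]
    note k2 = key[OF mm(2) mm(4) wb(2) c']
    note r1 = rd[OF mm(1) mm(3) wb(1) c_def[symmetric]]
    note r2 = rd[OF mm(2) mm(4) wb(2) c']
    note h1 = chr[OF mm(1) mm(3) wb(1) c_def[symmetric]]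
    note h2 = chr[OF mm(2) mm(4) wb(2) c']
    have eq: "distr (density M (\<lambda>x. ennreal (w x / c))) lborel Y = distr (density M (\<lambda>x. ennreal (w' x / c))) lborel Y'"
      by (rule Levy_uniqueness[OF r1 r2]) (simp only: h1 h2 ch)
    show ?thesis
      unfolding k1 k2 eq ..
  qed
qed

lemma int_lin3:
  fixes f g h :: "'a \<Rightarrow> complex"
  assumes "integrable M f" "integrable M g" "integrable M h"
  shows "integral\<^sup>L M (\<lambda>x. f x + g x / a + h x / b) = integral\<^sup>L M f + integral\<^sup>L M g / a + integral\<^sup>L M h / b"
    and "integral\<^sup>L M (\<lambda>x. f x + g x / a - h x / b) = integral\<^sup>L M f + integral\<^sup>L M g / a - integral\<^sup>L M h / b"
  using assms by (simp_all add: integral_add integral_diff integral_divide_zero)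

lemma int_lin4:
  fixes f g h :: "'a \<Rightarrow> real"
  assumes "integrable M f" "integrable M g" "integrable M h"
  shows "(CLINT x|M. complex_of_real (f x) - complex_of_real (g x) + \<i> * (complex_of_real (h x) - complex_of_real (g x)))
     = complex_of_real (integral\<^sup>L M f) - complex_of_real (integral\<^sup>L M g) + \<i> * (complex_of_real (integral\<^sup>L M h) - complex_of_real (integral\<^sup>L M g))"
proof -
  have i: "integrable M (\<lambda>x. complex_of_real (f x))" "integrable M (\<lambda>x. complex_of_real (g x))"
     "integrable M (\<lambda>x. complex_of_real (h x))" using assms by auto
  show ?thesis
    using i by (simp add: integral_add integral_diff del: integral_complex_of_real)
       (simp add: integral_complex_of_real)
qed

lemma box_unique:
  fixes M :: "'a measure" and Z Z' :: "nat \<Rightarrow> 'a \<Rightarrow> real" and n :: nat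
  assumes P: "prob_space M"
    and Zm[measurable]: "\<And>j. Z j \<in> borel_measurable M" "\<And>j. Z' j \<in> borel_measurable M"
    and ch: "\<And>t. (CLINT x|M. iexp (\<Sum>j<n. t j * Z j x)) = (CLINT x|M. iexp (\<Sum>j<n. t j * Z' j x))"
    and A[measurable]: "\<And>j. A j \<in> sets borel"
  shows "(LINT x|M. (\<Prod>j<n. indicator (A j) (Z j x) :: real)) = (LINT x|M. (\<Prod>j<n. indicator (A j) (Z' j x)))"
proof -
  have gen: "\<forall>A t. (\<forall>j. A j \<in> sets borel) \<longrightarrow>
      (CLINT x|M. complex_of_real (\<Prod>j<k. indicator (A j) (Z j x)) * iexp (\<Sum>j\<in>{k..<n}. t j * Z j x))
    = (CLINT x|M. complex_of_real (\<Prod>j<k. indicator (A j) (Z' j x)) * iexp (\<Sum>j\<in>{k..<n}. t j * Z' j x))"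
    if "k \<le> n" for k
    using that
  proof (induction k)
    case 0
    then show ?case using ch by (simp add: atLeast0LessThan)
  next
    case (Suc k)
    then have kn: "k < n" by simp
    note IH = Suc.IH[OF less_imp_le[OF kn]]
    show ?case
    proof (intro allI impI)
      fix A :: "nat \<Rightarrow> real set" and t :: "nat \<Rightarrow> real"
      assume Ab: "\<forall>j. A j \<in> sets borel"
      then have Ab'[measurable]: "\<And>j. A j \<in> sets borel" by simp
            have step: "(CLINT x|M. complex_of_real (\<Prod>j<Suc k. indicator (A j) (V j x)) * iexp (\<Sum>j\<in>{Suc k..<n}. t j * V j x))
          = complex_of_real (LINT x|M. (\<Prod>j<k. indicator (A j) (V j x)) * (1 + cos (\<Sum>j\<in>{Suc k..<n}. t j * V j x)) * indicator (A k) (V k x))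
          - complex_of_real (LINT x|M. (\<Prod>j<k. indicator (A j) (V j x)) * indicator (A k) (V k x))
          + \<i> * (complex_of_real (LINT x|M. (\<Prod>j<k. indicator (A j) (V j x)) * (1 + sin (\<Sum>j\<in>{Suc k..<n}. t j * V j x)) * indicator (A k) (V k x))
          - complex_of_real (LINT x|M. (\<Prod>j<k. indicator (A j) (V j x)) * indicator (A k) (V k x)))"
        and hyp0: "(CLINT x|M. complex_of_real ((\<Prod>j<k. indicator (A j) (V j x))) * iexp (s * V k x))
          = (CLINT x|M. complex_of_real (\<Prod>j<k. indicator (A j) (V j x)) * iexp (\<Sum>j\<in>{k..<n}. ((\<lambda>_. 0)(k:=s)) j * V j x))"
        and hyp1: "(CLINT x|M. complex_of_real ((\<Prod>j<k. indicator (A j) (V j x)) * (1 + cos (\<Sum>j\<in>{Suc k..<n}. t j * V j x))) * iexp (s * V k x))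
          = (CLINT x|M. complex_of_real (\<Prod>j<k. indicator (A j) (V j x)) * iexp (\<Sum>j\<in>{k..<n}. ((\<lambda>_. 0)(k:=s)) j * V j x))
          + (CLINT x|M. complex_of_real (\<Prod>j<k. indicator (A j) (V j x)) * iexp (\<Sum>j\<in>{k..<n}. (t(k:=s)) j * V j x)) / 2
          + (CLINT x|M. complex_of_real (\<Prod>j<k. indicator (A j) (V j x)) * iexp (\<Sum>j\<in>{k..<n}. ((\<lambda>j. - t j)(k:=s)) j * V j x)) / 2"
        and hyp2: "(CLINT x|M. complex_of_real ((\<Prod>j<k. indicator (A j) (V j x)) * (1 + sin (\<Sum>j\<in>{Suc k..<n}. t j * V j x))) * iexp (s * V k x))
          = (CLINT x|M. complex_of_real (\<Prod>j<k. indicator (A j) (V j x)) * iexp (\<Sum>j\<in>{k..<n}. ((\<lambda>_. 0)(k:=s)) j * V j x))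
          + (CLINT x|M. complex_of_real (\<Prod>j<k. indicator (A j) (V j x)) * iexp (\<Sum>j\<in>{k..<n}. (t(k:=s)) j * V j x)) / (2 * \<i>)
          - (CLINT x|M. complex_of_real (\<Prod>j<k. indicator (A j) (V j x)) * iexp (\<Sum>j\<in>{k..<n}. ((\<lambda>j. - t j)(k:=s)) j * V j x)) / (2 * \<i>)"
        if Vm[measurable]: "\<And>j. V j \<in> borel_measurable M" for V :: "nat \<Rightarrow> 'a \<Rightarrow> real" and s
      proof -
        define I where "I x = (\<Prod>j<k. indicator (A j) (V j x) :: real)" for x
        define th where "th x = (\<Sum>j\<in>{Suc k..<n}. t j * V j x)" for x
        define ik where "ik x = (indicator (A k) (V k x) :: real)" for x
        have [measurable]: "I \<in> borel_measurable M" "th \<in> borel_measurable M" "ik \<in> borel_measurable M"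
          unfolding I_def th_def ik_def by measurable
        have Ib: "0 \<le> I x \<and> I x \<le> 1" for x
          unfolding I_def by (auto intro!: prod_nonneg prod_le_1 simp: indicator_def)
        have ikb: "0 \<le> ik x \<and> ik x \<le> 1" for x
          unfolding ik_def by (auto simp: indicator_def)
        have nI: "norm (complex_of_real (I x)) \<le> 1" for x using Ib[of x] by simp
        have nik: "norm (I x * ik x) \<le> 1" for x using Ib[of x] ikb[of x]
          by (simp add: abs_mult mult_le_one)
        have intI: "integrable M (\<lambda>x. complex_of_real (I x) * iexp (r x))"
          if [measurable]: "r \<in> borel_measurable M" for r
          by (rule int_bdd[OF P, where B=1]) (use Ib in \<open>auto simp: norm_mult abs_le_iff\<close>)
        have sumeq: "(\<Sum>j\<in>{k..<n}. (u(k:=s)) j * V j x) = s * V k x + (\<Sum>j\<in>{Suc k..<n}. u j * V j x)" for u x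
          using sum_upd_split[OF kn, of u s "\<lambda>j. V j x"] by simp
        have s0: "(\<Sum>j\<in>{Suc k..<n}. (0::real) * V j x) = 0" for x by simp
        have sneg: "(\<Sum>j\<in>{Suc k..<n}. - t j * V j x) = - th x" for x
          unfolding th_def by (simp add: sum_negf)
        show "(CLINT x|M. complex_of_real ((\<Prod>j<k. indicator (A j) (V j x))) * iexp (s * V k x))
          = (CLINT x|M. complex_of_real (\<Prod>j<k. indicator (A j) (V j x)) * iexp (\<Sum>j\<in>{k..<n}. ((\<lambda>_. 0)(k:=s)) j * V j x))"
          by (simp only: sumeq s0) simp
        define g1 where "g1 x = complex_of_real (I x) * iexp (s * V k x)" for x
        define g2 where "g2 x = complex_of_real (I x) * iexp (s * V k x + th x)" for x
        define g3 where "g3 x = complex_of_real (I x) * iexp (s * V k x + - th x)" for x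
        have ig: "integrable M g1" "integrable M g2" "integrable M g3"
          unfolding g1_def g2_def g3_def by (rule intI; measurable)+
        have e1: "(\<lambda>x. complex_of_real (I x * (1 + cos (th x))) * iexp (s * V k x))
           = (\<lambda>x. g1 x + g2 x / 2 + g3 x / 2)"
          by (rule ext) (simp add: g1_def g2_def g3_def iexp_cos field_simps exp_add[symmetric] distrib_left)
        show "(CLINT x|M. complex_of_real ((\<Prod>j<k. indicator (A j) (V j x)) * (1 + cos (\<Sum>j\<in>{Suc k..<n}. t j * V j x))) * iexp (s * V k x))
          = (CLINT x|M. complex_of_real (\<Prod>j<k. indicator (A j) (V j x)) * iexp (\<Sum>j\<in>{k..<n}. ((\<lambda>_. 0)(k:=s)) j * V j x))
          + (CLINT x|M. complex_of_real (\<Prod>j<k. indicator (A j) (V j x)) * iexp (\<Sum>j\<in>{k..<n}. (t(k:=s)) j * V j x)) / 2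
          + (CLINT x|M. complex_of_real (\<Prod>j<k. indicator (A j) (V j x)) * iexp (\<Sum>j\<in>{k..<n}. ((\<lambda>j. - t j)(k:=s)) j * V j x)) / 2"
          unfolding sumeq s0 sneg add_0_right I_def[symmetric] th_def[symmetric] e1
             g1_def[symmetric] g2_def[symmetric] g3_def[symmetric]
          by (rule int_lin3(1)[OF ig])
        have e2: "(\<lambda>x. complex_of_real (I x * (1 + sin (th x))) * iexp (s * V k x))
           = (\<lambda>x. g1 x + g2 x / (2 * \<i>) - g3 x / (2 * \<i>))"
          by (rule ext) (simp add: g1_def g2_def g3_def iexp_sin field_simps exp_add[symmetric] distrib_left)
        show "(CLINT x|M. complex_of_real ((\<Prod>j<k. indicator (A j) (V j x)) * (1 + sin (\<Sum>j\<in>{Suc k..<n}. t j * V j x))) * iexp (s * V k x))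
          = (CLINT x|M. complex_of_real (\<Prod>j<k. indicator (A j) (V j x)) * iexp (\<Sum>j\<in>{k..<n}. ((\<lambda>_. 0)(k:=s)) j * V j x))
          + (CLINT x|M. complex_of_real (\<Prod>j<k. indicator (A j) (V j x)) * iexp (\<Sum>j\<in>{k..<n}. (t(k:=s)) j * V j x)) / (2 * \<i>)
          - (CLINT x|M. complex_of_real (\<Prod>j<k. indicator (A j) (V j x)) * iexp (\<Sum>j\<in>{k..<n}. ((\<lambda>j. - t j)(k:=s)) j * V j x)) / (2 * \<i>)"
          unfolding sumeq s0 sneg add_0_right I_def[symmetric] th_def[symmetric] e2
             g1_def[symmetric] g2_def[symmetric] g3_def[symmetric]
          by (rule int_lin3(2)[OF ig])
        have e3: "(\<lambda>x. complex_of_real (\<Prod>j<Suc k. indicator (A j) (V j x)) * iexp (th x))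
          = (\<lambda>x. complex_of_real (I x * (1 + cos (th x)) * ik x) - complex_of_real (I x * ik x)
                + \<i> * (complex_of_real (I x * (1 + sin (th x)) * ik x) - complex_of_real (I x * ik x)))"
          by (rule ext) (simp only: iexp_split[of "th _"], simp add: I_def ik_def field_simps)
        have ib: "integrable M (\<lambda>x. I x * (1 + g (th x)) * ik x)" if [measurable]: "g \<in> borel_measurable borel"
          and gb: "\<And>y. \<bar>g y\<bar> \<le> 1" for g
        proof (rule int_bdd[OF P, where B=2])
          show "(\<lambda>x. I x * (1 + g (th x)) * ik x) \<in> borel_measurable M" by measurable
          fix x
          have "\<bar>1 + g (th x)\<bar> \<le> 2" using gb[of "th x"] by linarith
          moreover have "\<bar>I x\<bar> \<le> 1" "\<bar>ik x\<bar> \<le> 1" using Ib[of x] ikb[of x] by auto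
          ultimately have a: "\<bar>I x\<bar> * \<bar>1 + g (th x)\<bar> \<le> 2"
            using mult_mono[of "\<bar>I x\<bar>" 1 "\<bar>1 + g (th x)\<bar>" 2] by auto
          have "\<bar>I x\<bar> * \<bar>1 + g (th x)\<bar> * \<bar>ik x\<bar> \<le> 2"
            using mult_mono[of "\<bar>I x\<bar> * \<bar>1 + g (th x)\<bar>" 2 "\<bar>ik x\<bar>" 1] a \<open>\<bar>ik x\<bar> \<le> 1\<close> by auto
          then show "norm (I x * (1 + g (th x)) * ik x) \<le> 2"
            unfolding real_norm_def abs_mult by simp
        qed
        have ic: "integrable M (\<lambda>x. I x * (1 + cos (th x)) * ik x)" by (rule ib) auto
        have isn: "integrable M (\<lambda>x. I x * (1 + sin (th x)) * ik x)" by (rule ib) auto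
        have i0: "integrable M (\<lambda>x. I x * ik x)" 
          by (rule int_bdd[OF P, where B=1]) (use nik in auto)
        show "(CLINT x|M. complex_of_real (\<Prod>j<Suc k. indicator (A j) (V j x)) * iexp (\<Sum>j\<in>{Suc k..<n}. t j * V j x))
          = complex_of_real (LINT x|M. (\<Prod>j<k. indicator (A j) (V j x)) * (1 + cos (\<Sum>j\<in>{Suc k..<n}. t j * V j x)) * indicator (A k) (V k x))
          - complex_of_real (LINT x|M. (\<Prod>j<k. indicator (A j) (V j x)) * indicator (A k) (V k x))
          + \<i> * (complex_of_real (LINT x|M. (\<Prod>j<k. indicator (A j) (V j x)) * (1 + sin (\<Sum>j\<in>{Suc k..<n}. t j * V j x)) * indicator (A k) (V k x))
          - complex_of_real (LINT x|M. (\<Prod>j<k. indicator (A j) (V j x)) * indicator (A k) (V k x)))"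
          unfolding I_def[symmetric] th_def[symmetric] ik_def[symmetric] e3
          by (rule int_lin4[OF ic i0 isn])
      qed
      show "(CLINT x|M. complex_of_real (\<Prod>j<Suc k. indicator (A j) (Z j x)) * iexp (\<Sum>j\<in>{Suc k..<n}. t j * Z j x))
          = (CLINT x|M. complex_of_real (\<Prod>j<Suc k. indicator (A j) (Z' j x)) * iexp (\<Sum>j\<in>{Suc k..<n}. t j * Z' j x))"
      proof -
        have IH': "\<And>u. (CLINT x|M. complex_of_real (\<Prod>j<k. indicator (A j) (Z j x)) * iexp (\<Sum>j\<in>{k..<n}. u j * Z j x))
          = (CLINT x|M. complex_of_real (\<Prod>j<k. indicator (A j) (Z' j x)) * iexp (\<Sum>j\<in>{k..<n}. u j * Z' j x))"
          using IH Ab by blast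
        have pb: "0 \<le> (\<Prod>j<k. indicator (A j) (V j x)::real) \<and> (\<Prod>j<k. indicator (A j) (V j x)::real) \<le> 1" for V :: "nat \<Rightarrow> 'a \<Rightarrow> real" and x
          by (auto intro!: prod_nonneg prod_le_1 simp: indicator_def)
        have wb: "0 \<le> (\<Prod>j<k. indicator (A j) (V j x)::real) * (1 + g) \<and> (\<Prod>j<k. indicator (A j) (V j x)::real) * (1 + g) \<le> 2"
          if "\<bar>g\<bar> \<le> 1" for V :: "nat \<Rightarrow> 'a \<Rightarrow> real" and x g
        proof -
          have "0 \<le> 1 + g" "1 + g \<le> 2" using that by auto
          then show ?thesis using pb[of V x] mult_mono[of "(\<Prod>j<k. indicator (A j) (V j x)::real)" 1 "1 + g" 2]
            by auto
        qed
        have pb2: "0 \<le> (\<Prod>j<k. indicator (A j) (V j x)::real) \<and> (\<Prod>j<k. indicator (A j) (V j x)::real) \<le> 2" for V :: "nat \<Rightarrow> 'a \<Rightarrow> real" and x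
          using pb[of V x] by auto
        have L0: "(LINT x|M. (\<Prod>j<k. indicator (A j) (Z j x)::real) * indicator (A k) (Z k x))
            = (LINT x|M. (\<Prod>j<k. indicator (A j) (Z' j x)) * indicator (A k) (Z' k x))"
          apply (rule levy_weighted[OF P, where B=2 and w="\<lambda>x. (\<Prod>j<k. indicator (A j) (Z j x))" and w'="\<lambda>x. (\<Prod>j<k. indicator (A j) (Z' j x))" and Y="Z k" and Y'="Z' k" and A="A k"])
          apply measurable[1]
          apply measurable[1]
          apply measurable[1]
          apply measurable[1]
          subgoal using pb2 by blast
          subgoal using pb2 by blast
          subgoal for s
            apply (subst hyp0[OF Zm(1)])
            apply (subst hyp0[OF Zm(2)])
            apply (rule IH')
            done
          using Ab by blast
        have L1: "(LINT x|M. (\<Prod>j<k. indicator (A j) (Z j x)::real) * (1 + cos (\<Sum>j\<in>{Suc k..<n}. t j * Z j x)) * indicator (A k) (Z k x))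
            = (LINT x|M. (\<Prod>j<k. indicator (A j) (Z' j x)) * (1 + cos (\<Sum>j\<in>{Suc k..<n}. t j * Z' j x)) * indicator (A k) (Z' k x))"
          apply (rule levy_weighted[OF P, where B=2 and w="\<lambda>x. (\<Prod>j<k. indicator (A j) (Z j x)) * (1 + cos (\<Sum>j\<in>{Suc k..<n}. t j * Z j x))" and w'="\<lambda>x. (\<Prod>j<k. indicator (A j) (Z' j x)) * (1 + cos (\<Sum>j\<in>{Suc k..<n}. t j * Z' j x))" and Y="Z k" and Y'="Z' k" and A="A k"])
          apply measurable[1]
          apply measurable[1]
          apply measurable[1]
          apply measurable[1]
          subgoal using wb abs_cos_le_one abs_sin_le_one by blast
          subgoal using wb abs_cos_le_one abs_sin_le_one by blast
          subgoal for s
            apply (subst hyp1[OF Zm(1)])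
            apply (subst hyp1[OF Zm(2)])
            apply (simp only: IH')
            done
          using Ab by blast
        have L2: "(LINT x|M. (\<Prod>j<k. indicator (A j) (Z j x)::real) * (1 + sin (\<Sum>j\<in>{Suc k..<n}. t j * Z j x)) * indicator (A k) (Z k x))
            = (LINT x|M. (\<Prod>j<k. indicator (A j) (Z' j x)) * (1 + sin (\<Sum>j\<in>{Suc k..<n}. t j * Z' j x)) * indicator (A k) (Z' k x))"
          apply (rule levy_weighted[OF P, where B=2 and w="\<lambda>x. (\<Prod>j<k. indicator (A j) (Z j x)) * (1 + sin (\<Sum>j\<in>{Suc k..<n}. t j * Z j x))" and w'="\<lambda>x. (\<Prod>j<k. indicator (A j) (Z' j x)) * (1 + sin (\<Sum>j\<in>{Suc k..<n}. t j * Z' j x))" and Y="Z k" and Y'="Z' k" and A="A k"])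
          apply measurable[1]
          apply measurable[1]
          apply measurable[1]
          apply measurable[1]
          subgoal using wb abs_cos_le_one abs_sin_le_one by blast
          subgoal using wb abs_cos_le_one abs_sin_le_one by blast
          subgoal for s
            apply (subst hyp2[OF Zm(1)])
            apply (subst hyp2[OF Zm(2)])
            apply (simp only: IH')
            done
          using Ab by blast
        show ?thesis
          unfolding step[OF Zm(1)] step[OF Zm(2)] L0 L1 L2 ..
      qed
    qed
  qed
  have "(CLINT x|M. complex_of_real (\<Prod>j<n. indicator (A j) (Z j x)) * iexp (\<Sum>j\<in>{n..<n}. (\<lambda>_. 0) j * Z j x))
    = (CLINT x|M. complex_of_real (\<Prod>j<n. indicator (A j) (Z' j x)) * iexp (\<Sum>j\<in>{n..<n}. (\<lambda>_. 0) j * Z' j x))"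
    by (rule gen[of n, OF order_refl, rule_format, OF A])
  then have "complex_of_real (LINT x|M. (\<Prod>j<n. indicator (A j) (Z j x))) = complex_of_real (LINT x|M. (\<Prod>j<n. indicator (A j) (Z' j x)))"
    by (simp del: of_real_prod)
  then show ?thesis by simp
qed


locale iso = fixes M :: "'a measure" and W :: "'h::real_inner \<Rightarrow> 'a \<Rightarrow> real"
  assumes P: "prob_space M" and I: "isonormal M W"
begin

lemma cg: fixes n :: nat and c :: "nat \<Rightarrow> real" and h :: "nat \<Rightarrow> 'h" shows "centered_gaussian M (\<lambda>x. \<Sum>i<n. c i * W (h i) x)"
  using I unfolding isonormal_def by blast

lemma cg1: "centered_gaussian M (W a)"
  using cg[where n=1 and c="\<lambda>_. 1" and h="\<lambda>_. a"] by simp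

lemma Wm[measurable]: "W a \<in> borel_measurable M"
  using cg1[of a] unfolding centered_gaussian_def by blast

lemma cov: "(LINT x|M. W a x * W b x) = inner a b"
  using I unfolding isonormal_def by blast

lemma sq_int: "integrable M (\<lambda>x. (W a x)\<^sup>2)"
proof -
  interpret prob_space M by (rule P)
  have "(AE x in M. W a x = 0) \<or> (\<exists>\<sigma>>0. distributed M lborel (W a) (normal_density 0 \<sigma>))"
    using cg1[of a] unfolding centered_gaussian_def by blast
  then show ?thesis
  proof
    assume "AE x in M. W a x = 0"
    then have "AE x in M. (W a x)\<^sup>2 = 0" by auto
    then show ?thesis by (subst integrable_cong_AE[where g="\<lambda>_. 0"]) auto
  next
    assume "\<exists>\<sigma>>0. distributed M lborel (W a) (normal_density 0 \<sigma>)"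
    then obtain \<sigma> where s: "\<sigma> > 0" "distributed M lborel (W a) (normal_density 0 \<sigma>)" by blast
    have "integrable lborel (\<lambda>x. normal_density 0 \<sigma> x * x\<^sup>2)"
      using integrable_normal_moment[where \<mu>=0 and \<sigma>=\<sigma> and k=2] s(1) by simp
    then show ?thesis
      using distributed_integrable[OF s(2), of "\<lambda>x. x\<^sup>2"] by simp
  qed
qed

lemma prod_int: "integrable M (\<lambda>x. W a x * W b x)"
proof (rule Bochner_Integration.integrable_bound)
  show "integrable M (\<lambda>x. (W a x)\<^sup>2 + (W b x)\<^sup>2)" using sq_int[of a] sq_int[of b] by auto
  show "(\<lambda>x. W a x * W b x) \<in> borel_measurable M" by measurable
  show "AE x in M. norm (W a x * W b x) \<le> norm ((W a x)\<^sup>2 + (W b x)\<^sup>2)"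
  proof (intro AE_I2)
    fix x
    have h: "2 * \<bar>W a x\<bar> * \<bar>W b x\<bar> \<le> (W a x)\<^sup>2 + (W b x)\<^sup>2"
      using sum_squares_bound[of "\<bar>W a x\<bar>" "\<bar>W b x\<bar>"] by (simp add: power2_abs)
    have "0 \<le> \<bar>W a x\<bar> * \<bar>W b x\<bar>" by simp
    then have "\<bar>W a x\<bar> * \<bar>W b x\<bar> \<le> (W a x)\<^sup>2 + (W b x)\<^sup>2" using h by linarith
    then show "norm (W a x * W b x) \<le> norm ((W a x)\<^sup>2 + (W b x)\<^sup>2)"
      by (simp add: abs_mult)
  qed
qed

lemma sq_norm: "(LINT x|M. (W a x)\<^sup>2) = (norm a)\<^sup>2"
  unfolding power2_norm_eq_inner using cov[of a a] by (simp add: power2_eq_square)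

lemma lin:
  assumes "finite I"
  shows "AE x in M. W (\<Sum>i\<in>I. c i *\<^sub>R h i) x = (\<Sum>i\<in>I. c i * W (h i) x)"
proof -
  define v where "v = (\<Sum>i\<in>I. c i *\<^sub>R h i)"
  define D where "D x = W v x - (\<Sum>i\<in>I. c i * W (h i) x)" for x
  have [measurable]: "D \<in> borel_measurable M" unfolding D_def by measurable
  have i1: "integrable M (\<lambda>x. W v x * W v x)" by (rule prod_int)
  have i2: "integrable M (\<lambda>x. c i * (W v x * W (h i) x))" for i using prod_int by auto
  have i3: "integrable M (\<lambda>x. c i * c j * (W (h i) x * W (h j) x))" for i j using prod_int by auto
  have Dsq: "(D x)\<^sup>2 = W v x * W v x - 2 * (\<Sum>i\<in>I. c i * (W v x * W (h i) x))
      + (\<Sum>i\<in>I. \<Sum>j\<in>I. c i * c j * (W (h i) x * W (h j) x))" for x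
    unfolding D_def power2_eq_square
    by (simp add: algebra_simps sum_distrib_left sum_distrib_right sum_subtractf)
  have "(LINT x|M. (D x)\<^sup>2) = inner v v - 2 * (\<Sum>i\<in>I. c i * inner v (h i))
      + (\<Sum>i\<in>I. \<Sum>j\<in>I. c i * c j * inner (h i) (h j))"
    unfolding Dsq using i1 i2 i3
    by (simp add: Bochner_Integration.integral_diff Bochner_Integration.integral_add
        integral_sum integrable_sum cov)
  also have "\<dots> = 0"
  proof -
    have a: "inner v v = (\<Sum>i\<in>I. c i * inner v (h i))"
      by (subst (2) v_def) (simp add: inner_sum_right)
    have b: "inner v v = (\<Sum>i\<in>I. \<Sum>j\<in>I. c i * c j * inner (h i) (h j))"
      unfolding v_def by (simp add: inner_sum_left inner_sum_right sum_distrib_left mult.assoc inner_commute mult.left_commute)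
    show ?thesis by (simp add: a[symmetric] b[symmetric])
  qed
  finally have z: "(LINT x|M. (D x)\<^sup>2) = 0" .
  have "integrable M (\<lambda>x. (D x)\<^sup>2)"
    unfolding Dsq using i1 i2 i3 by (intro Bochner_Integration.integrable_diff Bochner_Integration.integrable_add integrable_sum integrable_mult_right) auto
  then have "AE x in M. (D x)\<^sup>2 = 0"
    using z integral_nonneg_eq_0_iff_AE[of M "\<lambda>x. (D x)\<^sup>2"] by auto
  then show ?thesis unfolding D_def v_def by auto
qed

lemma gauss_cases:
  "(norm u = 0 \<and> (AE x in M. W u x = 0)) \<or> (norm u > 0 \<and> distributed M lborel (W u) (normal_density 0 (norm u)))"
proof -
  interpret prob_space M by (rule P)
  have "(AE x in M. W u x = 0) \<or> (\<exists>\<sigma>>0. distributed M lborel (W u) (normal_density 0 \<sigma>))"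
    using cg1[of u] unfolding centered_gaussian_def by blast
  then show ?thesis
  proof
    assume a: "AE x in M. W u x = 0"
    then have "AE x in M. (W u x)\<^sup>2 = 0" by auto
    then have "(LINT x|M. (W u x)\<^sup>2) = 0" by (rule integral_eq_zero_AE)
    then have "norm u = 0" using sq_norm[of u] by simp
    then show ?thesis using a by simp
  next
    assume "\<exists>\<sigma>>0. distributed M lborel (W u) (normal_density 0 \<sigma>)"
    then obtain \<sigma> where s: "\<sigma> > 0" "distributed M lborel (W u) (normal_density 0 \<sigma>)" by blast
    have e: "expectation (W u) = 0" by (rule normal_distributed_expectation[OF s])
    have "variance (W u) = \<sigma>\<^sup>2" by (rule normal_distributed_variance[OF s])
    then have "(norm u)\<^sup>2 = \<sigma>\<^sup>2" using e sq_norm[of u] by simp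
    then have "norm u = \<sigma>" using s(1) by (simp add: power2_eq_iff_nonneg)
    then show ?thesis using s by simp
  qed
qed

lemma distr_eq:
  assumes "norm u = norm v"
  shows "distr M lborel (W u) = distr M lborel (W v)"
proof (cases "norm u = 0")
  case True
  then have a: "AE x in M. W u x = 0" "AE x in M. W v x = 0"
    using gauss_cases[of u] gauss_cases[of v] assms by auto
  have "distr M lborel (W u) = distr M lborel (\<lambda>_. 0::real)"
    by (rule distr_cong_AE) (use a in auto)
  also have "\<dots> = distr M lborel (W v)"
    by (rule distr_cong_AE) (use a in auto)
  finally show ?thesis .
next
  case False
  then have "distributed M lborel (W u) (normal_density 0 (norm u))"
     "distributed M lborel (W v) (normal_density 0 (norm u))"
    using gauss_cases[of u] gauss_cases[of v] assms by auto
  then show ?thesis unfolding distributed_def by simp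
qed

lemma char_eq:
  assumes J: "finite J" and N: "norm (\<Sum>j\<in>J. t j *\<^sub>R c j) = norm (\<Sum>j\<in>J. t j *\<^sub>R d j)"
  shows "(CLINT x|M. iexp (\<Sum>j\<in>J. t j * W (c j) x)) = (CLINT x|M. iexp (\<Sum>j\<in>J. t j * W (d j) x))"
proof -
  have "(CLINT x|M. iexp (\<Sum>j\<in>J. t j * W (e j) x)) = (CLINT y|distr M lborel (W (\<Sum>j\<in>J. t j *\<^sub>R e j)). iexp y)" for e
  proof -
    have "(CLINT x|M. iexp (\<Sum>j\<in>J. t j * W (e j) x)) = (CLINT x|M. iexp (W (\<Sum>j\<in>J. t j *\<^sub>R e j) x))"
      by (rule integral_cong_AE) (use lin[OF J, of t e] in auto)
    also have "\<dots> = (CLINT y|distr M lborel (W (\<Sum>j\<in>J. t j *\<^sub>R e j)). iexp y)"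
      by (subst integral_distr) auto
    finally show ?thesis .
  qed
  then show ?thesis using distr_eq[OF N] by simp
qed

lemma max_eq:
  fixes c d :: "nat \<Rightarrow> 'h" and n :: nat
  assumes N: "\<And>t. norm (\<Sum>j<n. t j *\<^sub>R c j) = norm (\<Sum>j<n. t j *\<^sub>R d j)"
  shows "(\<integral>\<^sup>+x. ennreal (Max ((\<lambda>j. \<bar>W (c j) x\<bar>) ` {..<n})) \<partial>M)
       = (\<integral>\<^sup>+x. ennreal (Max ((\<lambda>j. \<bar>W (d j) x\<bar>) ` {..<n})) \<partial>M)"
proof (cases "n = 0")
  case True then show ?thesis by simp
next
  case False
  interpret prob_space M by (rule P)
  define Phi where "Phi e x = Max ((\<lambda>j. \<bar>W (e j) x\<bar>) ` {..<n})" for e :: "nat \<Rightarrow> 'h" and x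
  have [measurable]: "Phi e \<in> borel_measurable M" for e unfolding Phi_def by measurable
  have ch: "(CLINT x|M. iexp (\<Sum>j<n. t j * W (c j) x)) = (CLINT x|M. iexp (\<Sum>j<n. t j * W (d j) x))" for t
    using char_eq[of "{..<n}" t c d] N by simp
  have meq: "measure M ({x. Phi e x \<le> r} \<inter> space M) = (LINT x|M. (\<Prod>j<n. indicator {-r..r} (W (e j) x) :: real))" for e r
  proof -
    have "(LINT x|M. (\<Prod>j<n. indicator {-r..r} (W (e j) x) :: real)) = (LINT x|M. indicator {x. Phi e x \<le> r} x)"
    proof (rule Bochner_Integration.integral_cong[OF refl])
      fix x
      have iff: "Phi e x \<le> r \<longleftrightarrow> (\<forall>j<n. \<bar>W (e j) x\<bar> \<le> r)"
        unfolding Phi_def using False by (subst Max_le_iff) auto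
      show "(\<Prod>j<n. indicator {-r..r} (W (e j) x) :: real) = indicator {x. Phi e x \<le> r} x"
      proof (cases "Phi e x \<le> r")
        case True
        then show ?thesis using iff by (auto simp: indicator_def abs_le_iff intro!: prod.neutral)
      next
        case F: False
        then obtain j where "j < n" "\<bar>W (e j) x\<bar> > r" using iff by (auto simp: not_le)
        then show ?thesis using F by (auto simp: indicator_def abs_le_iff prod_zero_iff intro!: bexI[of _ j])
      qed
    qed
    also have "\<dots> = measure M ({x. Phi e x \<le> r} \<inter> space M)" by simp
    finally show ?thesis by simp
  qed
  have cdfeq: "cdf (distr M borel (Phi c)) = cdf (distr M borel (Phi d))"
  proof
    fix r
    have "cdf (distr M borel (Phi e)) r = measure M ({x. Phi e x \<le> r} \<inter> space M)" for e
      unfolding cdf_def by (subst measure_distr) (auto simp: vimage_def Int_def)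
    then show "cdf (distr M borel (Phi c)) r = cdf (distr M borel (Phi d)) r"
      unfolding meq using box_unique[OF P, of "\<lambda>j. W (c j)" "\<lambda>j. W (d j)" n "\<lambda>_. {-r..r}"] ch by simp
  qed
  have "distr M borel (Phi c) = distr M borel (Phi d)"
    by (rule cdf_unique[OF _ _ cdfeq]) auto
  then have "(\<integral>\<^sup>+y. ennreal y \<partial>distr M borel (Phi c)) = (\<integral>\<^sup>+y. ennreal y \<partial>distr M borel (Phi d))" by simp
  then show ?thesis unfolding Phi_def[symmetric] by (simp add: nn_integral_distr)
qed

end


definition orthonormal :: "'h::real_inner set \<Rightarrow> bool" where
  "orthonormal E \<longleftrightarrow> (\<forall>e\<in>E. norm e = 1) \<and> (\<forall>e\<in>E. \<forall>e'\<in>E. e \<noteq> e' \<longrightarrow> inner e e' = 0)"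

lemma orthonormal_inner:
  assumes "orthonormal E" "e \<in> E" "e' \<in> E"
  shows "inner e e' = (if e = e' then 1 else 0)"
  using assms unfolding orthonormal_def by (auto simp: norm_eq_1)

lemma orth_sum_inner:
  assumes "orthonormal E" "finite E" "e0 \<in> E"
  shows "inner (\<Sum>e\<in>E. u e *\<^sub>R e) e0 = u e0"
proof -
  have "inner (\<Sum>e\<in>E. u e *\<^sub>R e) e0 = (\<Sum>e\<in>E. u e * inner e e0)"
    by (simp add: inner_sum_left)
  also have "\<dots> = (\<Sum>e\<in>E. if e = e0 then u e else 0)"
    by (intro sum.cong refl) (use assms in \<open>simp add: orthonormal_inner\<close>)
  also have "\<dots> = u e0" using assms by simp
  finally show ?thesis .
qed

lemma gram_schmidt:
  fixes C :: "'h::real_inner set"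
  assumes "finite C"
  shows "\<exists>E. finite E \<and> card E \<le> card C \<and> orthonormal E \<and> C \<subseteq> span E"
  using assms
proof (induction C rule: finite_induct)
  case empty
  show ?case by (rule exI[of _ "{}"]) (simp add: orthonormal_def)
next
  case (insert a C)
  then obtain E where E: "finite E" "card E \<le> card C" "orthonormal E" "C \<subseteq> span E" by blast
  define a' where "a' = a - (\<Sum>e\<in>E. inner a e *\<^sub>R e)"
  have perp: "inner a' e = 0" if "e \<in> E" for e
  proof -
    have "inner (\<Sum>e'\<in>E. inner a e' *\<^sub>R e') e = inner a e"
      using orth_sum_inner[OF E(3) E(1) that, of "\<lambda>e'. inner a e'"] by simp
    then show ?thesis unfolding a'_def by (simp add: inner_diff_left)
  qed
  have sE: "(\<Sum>e\<in>E. inner a e *\<^sub>R e) \<in> span E"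
    by (intro span_sum span_scale span_base)
  show ?case
  proof (cases "a' = 0")
    case True
    then have "a \<in> span E" using sE unfolding a'_def by simp
    moreover have "card E \<le> card (insert a C)" using E(2) insert(1,2) by simp
    ultimately show ?thesis using E by (intro exI[of _ E]) auto
  next
    case False
    define n where "n = a' /\<^sub>R norm a'"
    have nn: "norm n = 1" using False unfolding n_def by simp
    have np: "inner n e = 0" if "e \<in> E" for e using perp[OF that] unfolding n_def by simp
    have nE: "n \<notin> E" using np nn by (metis inner_eq_zero_iff norm_zero zero_neq_one)
    have on: "orthonormal (insert n E)"
      using E(3) nn np unfolding orthonormal_def by (auto simp: inner_commute)
    have "a = norm a' *\<^sub>R n + (\<Sum>e\<in>E. inner a e *\<^sub>R e)"
      using False unfolding n_def a'_def by simp
    moreover have "norm a' *\<^sub>R n \<in> span (insert n E)" by (intro span_scale span_base) simp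
    moreover have "(\<Sum>e\<in>E. inner a e *\<^sub>R e) \<in> span (insert n E)"
      using sE span_mono[of E "insert n E"] by auto
    ultimately have "a \<in> span (insert n E)" by (metis span_add)
    moreover have "C \<subseteq> span (insert n E)" using E(4) span_mono[of E "insert n E"] by auto
    moreover have "card (insert n E) \<le> card (insert a C)"
      using E(1,2) nE insert(1,2) by simp
    ultimately show ?thesis using E(1) on by (intro exI[of _ "insert n E"]) auto
  qed
qed

definition proj :: "'h::real_inner set \<Rightarrow> 'h \<Rightarrow> 'h" where
  "proj E h = (\<Sum>e\<in>E. inner h e *\<^sub>R e)"

lemma proj_span:
  assumes "orthonormal E" "finite E" "v \<in> span E"
  shows "proj E v = v"
proof -
  obtain u where u: "v = (\<Sum>e\<in>E. u e *\<^sub>R e)" using assms(3) span_finite[OF assms(2)] by auto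
  have "inner v e = u e" if "e \<in> E" for e using orth_sum_inner[OF assms(1,2) that] u by simp
  then show ?thesis unfolding proj_def u[symmetric] using u by (metis (no_types, lifting) sum.cong)
qed

lemma proj_perp:
  assumes "orthonormal E" "finite E" "e \<in> E"
  shows "inner (h - proj E h) e = 0"
  using orth_sum_inner[OF assms, of "\<lambda>e. inner h e"] unfolding proj_def by (simp add: inner_diff_left)

lemma proj_in_span: "proj E h \<in> span E"
  unfolding proj_def by (intro span_sum span_scale span_base)

lemma perp_span:
  assumes "\<And>e. e \<in> E \<Longrightarrow> inner w e = 0" "v \<in> span E"
  shows "inner w v = 0"
  using assms(2)
proof (induction rule: span_induct_alt)
  case base then show ?case by simp
next
  case (step c x y) then show ?case using assms(1) by (simp add: inner_add_right)
qed

lemma proj_diff: "proj E (a - b) = proj E a - proj E b"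
  unfolding proj_def by (simp add: inner_diff_left scaleR_diff_left sum_subtractf)

lemma bessel:
  assumes "orthonormal E" "finite E"
  shows "(\<Sum>e\<in>E. (inner h e)\<^sup>2) \<le> (norm h)\<^sup>2"
proof -
  have p: "inner (h - proj E h) (proj E h) = 0"
    using perp_span[of E "h - proj E h" "proj E h"] proj_perp[OF assms] proj_in_span by blast
  have "inner h (proj E h) = (\<Sum>e\<in>E. (inner h e)\<^sup>2)"
    unfolding proj_def by (simp add: inner_sum_right power2_eq_square)
  moreover have "inner (proj E h) (proj E h) = inner h (proj E h)"
    using p by (simp add: inner_diff_left)
  moreover have "0 \<le> inner (h - proj E h) (h - proj E h)" by simp
  ultimately show ?thesis
    by (simp add: inner_diff_left inner_diff_right inner_commute power2_norm_eq_inner)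
qed

lemma ennreal_Max:
  fixes f :: "'b \<Rightarrow> real"
  assumes "finite A" "A \<noteq> {}"
  shows "ennreal (Max (f ` A)) = (SUP a\<in>A. ennreal (f a))"
proof (rule antisym)
  have "Max (f ` A) \<in> f ` A" using Max_in[of "f ` A"] assms by auto
  then obtain a0 where a0: "a0 \<in> A" "f a0 = Max (f ` A)" by auto
  show "ennreal (Max (f ` A)) \<le> (SUP a\<in>A. ennreal (f a))"
    using a0 by (metis SUP_upper)
  show "(SUP a\<in>A. ennreal (f a)) \<le> ennreal (Max (f ` A))"
    using assms by (intro SUP_least ennreal_leI Max_ge) auto
qed


context iso
begin

lemma lin_add: "AE x in M. W (u + v) x = W u x + W v x"
  using lin[of "{0::nat,1}" "\<lambda>i. 1" "\<lambda>i. if i = 0 then u else v"] by simp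

lemma lin_diff: "AE x in M. W (u - v) x = W u x - W v x"
  using lin[of "{0::nat,1}" "\<lambda>i. if i = 0 then 1 else -1" "\<lambda>i. if i = 0 then u else v"] by simp

lemma R_bound:
  assumes E: "finite E" "orthonormal E"
  shows "(\<integral>\<^sup>+x. ennreal (sqrt (\<Sum>e\<in>E. (W e x)\<^sup>2)) \<partial>M) \<le> ennreal (sqrt (card E))"
proof (cases "E = {}")
  case True then show ?thesis by simp
next
  case False
  interpret prob_space M by (rule P)
  define d where "d = real (card E)"
  define a where "a = sqrt d"
  have dpos: "d > 0" using False E(1) unfolding d_def by (simp add: card_gt_0_iff)
  then have apos: "a > 0" unfolding a_def by simp
  have a2: "a * a = d" unfolding a_def using dpos by simp
  have pw: "sqrt y \<le> y / (2 * a) + a / 2" if "y \<ge> 0" for y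
  proof -
    have "0 \<le> (sqrt y - a)\<^sup>2" by simp
    then have "2 * a * sqrt y \<le> y + a * a" using that by (simp add: power2_eq_square algebra_simps)
    then show ?thesis using apos by (simp add: field_simps)
  qed
  have int: "integrable M (\<lambda>x. (\<Sum>e\<in>E. (W e x)\<^sup>2) / (2 * a) + a / 2)"
    using sq_int by auto
  have "(\<integral>\<^sup>+x. ennreal (sqrt (\<Sum>e\<in>E. (W e x)\<^sup>2)) \<partial>M)
      \<le> (\<integral>\<^sup>+x. ennreal ((\<Sum>e\<in>E. (W e x)\<^sup>2) / (2 * a) + a / 2) \<partial>M)"
    by (intro nn_integral_mono ennreal_leI pw) (simp add: sum_nonneg)
  also have "\<dots> = ennreal (LINT x|M. (\<Sum>e\<in>E. (W e x)\<^sup>2) / (2 * a) + a / 2)"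
    using int apos by (intro nn_integral_eq_integral) (auto intro!: add_nonneg_nonneg divide_nonneg_pos sum_nonneg)
  also have "(LINT x|M. (\<Sum>e\<in>E. (W e x)\<^sup>2) / (2 * a) + a / 2) = d / (2 * a) + a / 2"
  proof -
    have "(LINT x|M. (\<Sum>e\<in>E. (W e x)\<^sup>2)) = (\<Sum>e\<in>E. (norm e)\<^sup>2)"
      using sq_int by (simp add: integral_sum sq_norm)
    also have "\<dots> = d" using E(2) unfolding d_def orthonormal_def by simp
    finally have "(LINT x|M. (\<Sum>e\<in>E. (W e x)\<^sup>2)) = d" .
    then show ?thesis using sq_int by (simp add: integrable_sum prob_space)
  qed
  also have "d / (2 * a) + a / 2 = a"
    using apos a2 by (simp add: field_simps)
  finally show ?thesis unfolding a_def d_def .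
qed

lemma Q_bound:
  fixes a b :: "'c \<Rightarrow> 'h"
  assumes F0: "finite F0" "F0 \<noteq> {}" and orth: "\<And>z z'. inner (a z) (b z') = 0"
  shows "(\<integral>\<^sup>+x. ennreal (Max ((\<lambda>z. \<bar>W (a z) x\<bar>) ` F0)) \<partial>M)
       \<le> (\<integral>\<^sup>+x. ennreal (Max ((\<lambda>z. \<bar>W (a z + b z) x\<bar>) ` F0)) \<partial>M)"
proof -
  define n where "n = card F0"
  obtain g where g: "bij_betw g {0..<n} F0" using ex_bij_betw_nat_finite[OF F0(1)] unfolding n_def by blast
  have gim: "g ` {..<n} = F0" using g by (simp add: bij_betw_def atLeast0LessThan)
  have n0: "n > 0" using F0 unfolding n_def by (simp add: card_gt_0_iff)
  define c where "c j = a (g j) + b (g j)" for j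
  define d where "d j = a (g j) - b (g j)" for j
  have N: "norm (\<Sum>j<n. t j *\<^sub>R c j) = norm (\<Sum>j<n. t j *\<^sub>R d j)" for t
  proof -
    define A where "A = (\<Sum>j<n. t j *\<^sub>R a (g j))"
    define B where "B = (\<Sum>j<n. t j *\<^sub>R b (g j))"
    have sc: "(\<Sum>j<n. t j *\<^sub>R c j) = A + B" unfolding A_def B_def c_def
      by (simp add: scaleR_add_right sum.distrib)
    have sd: "(\<Sum>j<n. t j *\<^sub>R d j) = A - B" unfolding A_def B_def d_def
      by (simp add: scaleR_diff_right sum_subtractf)
    have AB: "inner A B = 0" unfolding A_def B_def
      by (simp add: inner_sum_left inner_sum_right orth)
    have "(norm (A + B))\<^sup>2 = (norm (A - B))\<^sup>2"
      by (simp add: power2_norm_eq_inner inner_add_left inner_add_right inner_diff_left inner_diff_right AB inner_commute)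
    then show ?thesis unfolding sc sd by (simp add: power2_eq_iff_nonneg)
  qed
  have me: "(\<integral>\<^sup>+x. ennreal (Max ((\<lambda>j. \<bar>W (c j) x\<bar>) ` {..<n})) \<partial>M)
       = (\<integral>\<^sup>+x. ennreal (Max ((\<lambda>j. \<bar>W (d j) x\<bar>) ` {..<n})) \<partial>M)"
    by (rule max_eq[OF N])
  have im: "(\<lambda>z. f z) ` F0 = (\<lambda>j. f (g j)) ` {..<n}" for f :: "'c \<Rightarrow> real"
    using gim by auto
  have ae: "AE x in M. \<forall>z\<in>F0. W (a z + b z) x = W (a z) x + W (b z) x \<and> W (a z - b z) x = W (a z) x - W (b z) x"
    using lin_add lin_diff by (intro AE_finite_allI[OF F0(1)]) auto
  have pw: "AE x in M. Max ((\<lambda>z. \<bar>W (a z) x\<bar>) ` F0)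
      \<le> (1/2) * (Max ((\<lambda>j. \<bar>W (c j) x\<bar>) ` {..<n}) + Max ((\<lambda>j. \<bar>W (d j) x\<bar>) ` {..<n}))"
  proof (rule eventually_mono[OF ae])
    fix x assume h: "\<forall>z\<in>F0. W (a z + b z) x = W (a z) x + W (b z) x \<and> W (a z - b z) x = W (a z) x - W (b z) x"
    have b: "\<bar>W (a z) x\<bar> \<le> (1/2) * (Max ((\<lambda>j. \<bar>W (c j) x\<bar>) ` {..<n}) + Max ((\<lambda>j. \<bar>W (d j) x\<bar>) ` {..<n}))"
      if z: "z \<in> F0" for z
    proof -
      obtain j where j: "j < n" "g j = z" using gim z by auto
      have "\<bar>W (a z) x\<bar> \<le> (1/2) * (\<bar>W (c j) x\<bar> + \<bar>W (d j) x\<bar>)"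
        using h z j unfolding c_def d_def by auto
      also have "\<dots> \<le> (1/2) * (Max ((\<lambda>j. \<bar>W (c j) x\<bar>) ` {..<n}) + Max ((\<lambda>j. \<bar>W (d j) x\<bar>) ` {..<n}))"
        using j by (intro mult_left_mono add_mono Max_ge) auto
      finally show ?thesis .
    qed
    show "Max ((\<lambda>z. \<bar>W (a z) x\<bar>) ` F0)
      \<le> (1/2) * (Max ((\<lambda>j. \<bar>W (c j) x\<bar>) ` {..<n}) + Max ((\<lambda>j. \<bar>W (d j) x\<bar>) ` {..<n}))"
      using F0 b by (subst Max_le_iff) auto
  qed
  define Mc where "Mc x = Max ((\<lambda>j. \<bar>W (c j) x\<bar>) ` {..<n})" for x
  define Md where "Md x = Max ((\<lambda>j. \<bar>W (d j) x\<bar>) ` {..<n})" for x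
  have [measurable]: "Mc \<in> borel_measurable M" "Md \<in> borel_measurable M" unfolding Mc_def Md_def by measurable
  have nn: "0 \<le> Mc x" "0 \<le> Md x" for x unfolding Mc_def Md_def using n0
    by (auto intro!: order.trans[OF abs_ge_zero Max_ge[where x="\<bar>W _ x\<bar>"]] simp: image_iff)
  have "(\<integral>\<^sup>+x. ennreal (Max ((\<lambda>z. \<bar>W (a z) x\<bar>) ` F0)) \<partial>M) \<le> (\<integral>\<^sup>+x. ennreal ((1/2) * (Mc x + Md x)) \<partial>M)"
    using pw unfolding Mc_def Md_def by (intro nn_integral_mono_AE) (auto elim!: eventually_mono intro: ennreal_leI)
  also have "\<dots> = (\<integral>\<^sup>+x. ennreal (1/2) * (ennreal (Mc x) + ennreal (Md x)) \<partial>M)"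
  proof (intro nn_integral_cong)
    fix x
    have a: "ennreal ((1/2) * (Mc x + Md x)) = ennreal (1/2) * ennreal (Mc x + Md x)"
      using nn[of x] by (intro ennreal_mult) auto
    have b: "ennreal (Mc x + Md x) = ennreal (Mc x) + ennreal (Md x)"
      using nn[of x] by (intro ennreal_plus) auto
    show "ennreal ((1/2) * (Mc x + Md x)) = ennreal (1/2) * (ennreal (Mc x) + ennreal (Md x))"
      unfolding a b ..
  qed
  also have "\<dots> = ennreal (1/2) * ((\<integral>\<^sup>+x. ennreal (Mc x) \<partial>M) + (\<integral>\<^sup>+x. ennreal (Md x) \<partial>M))"
    by (simp add: nn_integral_cmult nn_integral_add)
  also have "\<dots> = (\<integral>\<^sup>+x. ennreal (Mc x) \<partial>M)"
  proof -
    have "(\<integral>\<^sup>+x. ennreal (Md x) \<partial>M) = (\<integral>\<^sup>+x. ennreal (Mc x) \<partial>M)" using me unfolding Mc_def Md_def by simp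
    moreover have "ennreal (1/2) * (X + X) = X" for X :: ennreal
    proof -
      have "ennreal (1/2) * (X + X) = (ennreal (1/2) * 2) * X" by (simp add: mult_2[symmetric] mult.assoc)
      also have "ennreal (1/2) * 2 = 1"
      proof -
        have "ennreal ((1/2) * 2) = ennreal (1/2) * ennreal 2" by (rule ennreal_mult) auto
        then show ?thesis by simp
      qed
      finally show ?thesis by simp
    qed
    ultimately show ?thesis by simp
  qed
  also have "\<dots> = (\<integral>\<^sup>+x. ennreal (Max ((\<lambda>z. \<bar>W (a z + b z) x\<bar>) ` F0)) \<partial>M)"
    unfolding Mc_def c_def by (simp add: im[of "\<lambda>z. \<bar>W (a z + b z) _\<bar>"])
  finally show ?thesis .
qed

lemma mod_lower:
  assumes F0: "finite F0" "F0 \<noteq> {}" "F0 \<subseteq> F" and pz: "\<And>z. z \<in> F0 \<Longrightarrow> pz z \<in> F \<and> norm (z - pz z) \<le> \<epsilon>"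
  shows "(\<integral>\<^sup>+x. ennreal (Max ((\<lambda>z. \<bar>W (z - pz z) x\<bar>) ` F0)) \<partial>M) \<le> modulus M W F \<epsilon>"
proof -
  define S0 where "S0 = (\<lambda>z. (z, pz z)) ` F0"
  have S0: "S0 \<in> {S. finite S \<and> S \<subseteq> {(f, g). f \<in> F \<and> g \<in> F \<and> norm (f - g) \<le> \<epsilon>}}"
    unfolding S0_def using F0 pz by auto
  have ae: "AE x in M. \<forall>z\<in>F0. W (z - pz z) x = W z x - W (pz z) x"
    using lin_diff by (intro AE_finite_allI[OF F0(1)]) auto
  have "(\<integral>\<^sup>+x. ennreal (Max ((\<lambda>z. \<bar>W (z - pz z) x\<bar>) ` F0)) \<partial>M)
      = (\<integral>\<^sup>+x. (SUP p\<in>S0. ennreal \<bar>W (fst p) x - W (snd p) x\<bar>) \<partial>M)"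
  proof (rule nn_integral_cong_AE, rule eventually_mono[OF ae])
    fix x assume h: "\<forall>z\<in>F0. W (z - pz z) x = W z x - W (pz z) x"
    have "ennreal (Max ((\<lambda>z. \<bar>W (z - pz z) x\<bar>) ` F0)) = (SUP z\<in>F0. ennreal \<bar>W (z - pz z) x\<bar>)"
      by (rule ennreal_Max[OF F0(1,2)])
    also have "\<dots> = (SUP z\<in>F0. ennreal \<bar>W z x - W (pz z) x\<bar>)"
      using h by (intro SUP_cong) auto
    also have "\<dots> = (SUP p\<in>S0. ennreal \<bar>W (fst p) x - W (snd p) x\<bar>)"
      unfolding S0_def by (simp add: image_image)
    finally show "ennreal (Max ((\<lambda>z. \<bar>W (z - pz z) x\<bar>) ` F0)) = (SUP p\<in>S0. ennreal \<bar>W (fst p) x - W (snd p) x\<bar>)" .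
  qed
  also have "\<dots> \<le> modulus M W F \<epsilon>"
    unfolding modulus_def by (rule SUP_upper[OF S0])
  finally show ?thesis .
qed

lemma main_bound:
  assumes d: "\<delta> \<ge> 0" and C: "finite C" "C \<subseteq> F" "F \<subseteq> (\<Union>c\<in>C. cball c \<epsilon>)"
  shows "modulus M W (convex hull F) \<delta> \<le> 2 * modulus M W F \<epsilon> + ennreal \<delta> * ennreal (sqrt (card C))"
proof -
  obtain E where E: "finite E" "card E \<le> card C" "orthonormal E" "C \<subseteq> span E"
    using gram_schmidt[OF C(1)] by blast
  define pz where "pz x = (SOME c. c \<in> C \<and> x \<in> cball c \<epsilon>)" for x
  have pz: "pz x \<in> C \<and> norm (x - pz x) \<le> \<epsilon>" if xF: "x \<in> F" for x
  proof -
    obtain c where "c \<in> C" "x \<in> cball c \<epsilon>" using C(3) xF by blast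
    then have "\<exists>c. c \<in> C \<and> x \<in> cball c \<epsilon>" by blast
    then have "pz x \<in> C \<and> x \<in> cball (pz x) \<epsilon>" unfolding pz_def by (rule someI_ex)
    then show ?thesis by (simp add: dist_norm norm_minus_commute)
  qed
  define Pj where "Pj = proj E"
  define a where "a z = (z - pz z) - Pj (z - pz z)" for z
  define b where "b z = Pj (z - pz z)" for z
  have orth: "inner (a z) (b z') = 0" for z z'
    unfolding a_def b_def Pj_def
    by (rule perp_span[OF _ proj_in_span]) (rule proj_perp[OF E(3) E(1)])
  have decomp: "a z + Pj z = z" if "z \<in> F" for z
  proof -
    have "Pj (pz z) = pz z" unfolding Pj_def using pz[OF that] E by (intro proj_span) auto
    then show ?thesis unfolding a_def Pj_def by (simp add: proj_diff)
  qed
  have ab: "a z + b z = z - pz z" for z unfolding a_def b_def by simp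
  show ?thesis unfolding modulus_def[of M W "convex hull F"]
  proof (rule SUP_least)
    fix S assume S: "S \<in> {S. finite S \<and> S \<subseteq> {(f, g). f \<in> convex hull F \<and> g \<in> convex hull F \<and> norm (f - g) \<le> \<delta>}}"
    show "(\<integral>\<^sup>+x. (SUP p\<in>S. ennreal \<bar>W (fst p) x - W (snd p) x\<bar>) \<partial>M)
        \<le> 2 * modulus M W F \<epsilon> + ennreal \<delta> * ennreal (sqrt (card C))"
    proof (cases "S = {}")
      case True then show ?thesis by (simp add: bot_ennreal)
    next
      case False
      define Y where "Y = fst ` S \<union> snd ` S"
      have Y: "finite Y" "Y \<subseteq> convex hull F" "Y \<noteq> {}" using S False unfolding Y_def by auto
      have "\<forall>y\<in>Y. \<exists>p. finite (fst p) \<and> fst p \<subseteq> F \<and> (\<forall>x\<in>fst p. 0 \<le> snd p x) \<and> sum (snd p) (fst p) = 1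
          \<and> (\<Sum>x\<in>fst p. snd p x *\<^sub>R x) = y"
      proof
        fix y assume "y \<in> Y"
        then have "y \<in> convex hull F" using Y by auto
        then obtain T u where "finite T" "T \<subseteq> F" "\<forall>x\<in>T. 0 \<le> u x" "sum u T = 1" "(\<Sum>v\<in>T. u v *\<^sub>R v) = y"
          unfolding convex_hull_explicit by blast
        then show "\<exists>p. finite (fst p) \<and> fst p \<subseteq> F \<and> (\<forall>x\<in>fst p. 0 \<le> snd p x) \<and> sum (snd p) (fst p) = 1
          \<and> (\<Sum>x\<in>fst p. snd p x *\<^sub>R x) = y"
          by (intro exI[of _ "(T, u)"]) auto
      qed
      note ex = this
      obtain rep where rep: "\<forall>y\<in>Y. finite (fst (rep y)) \<and> fst (rep y) \<subseteq> F \<and> (\<forall>x\<in>fst (rep y). 0 \<le> snd (rep y) x)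
          \<and> sum (snd (rep y)) (fst (rep y)) = 1 \<and> (\<Sum>x\<in>fst (rep y). snd (rep y) x *\<^sub>R x) = y"
        using bchoice[OF ex] by (elim exE) blast
      define R where "R y = fst (rep y)" for y
      define U where "U y = snd (rep y)" for y
      have RU: "finite (R y)" "R y \<subseteq> F" "\<And>z. z \<in> R y \<Longrightarrow> 0 \<le> U y z" "sum (U y) (R y) = 1"
          "(\<Sum>z\<in>R y. U y z *\<^sub>R z) = y" if "y \<in> Y" for y
        using rep that unfolding R_def U_def by auto
      define F0 where "F0 = (\<Union>y\<in>Y. R y)"
      have F0: "finite F0" "F0 \<subseteq> F" using RU Y unfolding F0_def by auto
      have F0ne: "F0 \<noteq> {}"
      proof -
        obtain y where y: "y \<in> Y" using Y(3) by auto
        then have "R y \<noteq> {}" using RU(4)[OF y] by auto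
        then show ?thesis using y unfolding F0_def by auto
      qed
      define Q where "Q x = Max ((\<lambda>z. \<bar>W (a z) x\<bar>) ` F0)" for x
      define Rr where "Rr x = sqrt (\<Sum>e\<in>E. (W e x)\<^sup>2)" for x
      have [measurable]: "Q \<in> borel_measurable M" "Rr \<in> borel_measurable M"
        unfolding Q_def Rr_def using F0 by measurable
      have Qnn: "0 \<le> Q x" for x
      proof -
        obtain z where "z \<in> F0" using F0ne by auto
        then show ?thesis unfolding Q_def using F0 by (intro order.trans[OF abs_ge_zero Max_ge]) auto
      qed
      have Rnn: "0 \<le> Rr x" for x unfolding Rr_def by (simp add: sum_nonneg)
      have ae1: "AE x in M. \<forall>y\<in>Y. W y x = (\<Sum>z\<in>R y. U y z * W z x)"
      proof (rule AE_finite_allI[OF Y(1)])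
        fix y assume y: "y \<in> Y"
        show "AE x in M. W y x = (\<Sum>z\<in>R y. U y z * W z x)"
          using lin[OF RU(1)[OF y], of "U y" "\<lambda>z. z"] RU(5)[OF y] by simp
      qed
      have ae2: "AE x in M. \<forall>z\<in>F0. W z x = W (a z) x + W (Pj z) x"
      proof (rule AE_finite_allI[OF F0(1)])
        fix z assume z: "z \<in> F0"
        show "AE x in M. W z x = W (a z) x + W (Pj z) x"
          using lin_add[of "a z" "Pj z"] decomp[of z] z F0(2) by auto
      qed
      have ae3: "AE x in M. \<forall>z\<in>F0. W (Pj z) x = (\<Sum>e\<in>E. inner z e * W e x)"
      proof (rule AE_finite_allI[OF F0(1)])
        fix z assume z: "z \<in> F0"
        show "AE x in M. W (Pj z) x = (\<Sum>e\<in>E. inner z e * W e x)"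
          using lin[OF E(1), of "\<lambda>e. inner z e" "\<lambda>e. e"] unfolding Pj_def proj_def by simp
      qed
      have pw: "AE x in M. (SUP p\<in>S. ennreal \<bar>W (fst p) x - W (snd p) x\<bar>) \<le> ennreal (2 * Q x + \<delta> * Rr x)"
      proof (rule eventually_mono[OF eventually_conj[OF ae1 eventually_conj[OF ae2 ae3]]])
        fix x assume h: "(\<forall>y\<in>Y. W y x = (\<Sum>z\<in>R y. U y z * W z x)) \<and>
            (\<forall>z\<in>F0. W z x = W (a z) x + W (Pj z) x) \<and> (\<forall>z\<in>F0. W (Pj z) x = (\<Sum>e\<in>E. inner z e * W e x))"
        define T where "T y = (\<Sum>z\<in>R y. U y z * W (a z) x)" for y
        have Ty: "W y x = T y + (\<Sum>e\<in>E. inner y e * W e x)" if y: "y \<in> Y" for y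
        proof -
          have sub: "R y \<subseteq> F0" using y unfolding F0_def by auto
          have "W y x = (\<Sum>z\<in>R y. U y z * (W (a z) x + (\<Sum>e\<in>E. inner z e * W e x)))"
            using h y sub by (auto intro!: sum.cong)
          also have "\<dots> = T y + (\<Sum>z\<in>R y. \<Sum>e\<in>E. U y z * inner z e * W e x)"
            unfolding T_def by (simp add: distrib_left sum.distrib sum_distrib_left mult.assoc)
          also have "(\<Sum>z\<in>R y. \<Sum>e\<in>E. U y z * inner z e * W e x) = (\<Sum>e\<in>E. inner y e * W e x)"
          proof -
            have "(\<Sum>z\<in>R y. \<Sum>e\<in>E. U y z * inner z e * W e x) = (\<Sum>e\<in>E. (\<Sum>z\<in>R y. U y z * inner z e) * W e x)"
              by (subst sum.swap) (simp add: sum_distrib_right)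
            also have "\<dots> = (\<Sum>e\<in>E. inner (\<Sum>z\<in>R y. U y z *\<^sub>R z) e * W e x)"
              by (simp add: inner_sum_left)
            finally show ?thesis using RU(5)[OF y] by simp
          qed
          finally show ?thesis .
        qed
        have Tb: "\<bar>T y\<bar> \<le> Q x" if y: "y \<in> Y" for y
        proof -
          have sub: "R y \<subseteq> F0" using y unfolding F0_def by auto
          have "\<bar>T y\<bar> \<le> (\<Sum>z\<in>R y. \<bar>U y z * W (a z) x\<bar>)"
            unfolding T_def by (rule sum_abs)
          also have "\<dots> = (\<Sum>z\<in>R y. U y z * \<bar>W (a z) x\<bar>)"
            using RU(3)[OF y] by (intro sum.cong) (auto simp: abs_mult)
          also have "\<dots> \<le> (\<Sum>z\<in>R y. U y z * Q x)"
            using RU(3)[OF y] sub F0(1) unfolding Q_def by (intro sum_mono mult_left_mono Max_ge) auto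
          also have "\<dots> = Q x" using RU(4)[OF y] by (simp add: sum_distrib_right[symmetric])
          finally show ?thesis .
        qed
        have Eb: "\<bar>\<Sum>e\<in>E. inner v e * W e x\<bar> \<le> norm v * Rr x" for v
        proof -
          have "\<bar>\<Sum>e\<in>E. inner v e * W e x\<bar> \<le> (\<Sum>e\<in>E. \<bar>inner v e\<bar> * \<bar>W e x\<bar>)"
            by (rule order.trans[OF sum_abs]) (simp add: abs_mult)
          also have "\<dots> \<le> L2_set (\<lambda>e. inner v e) E * L2_set (\<lambda>e. W e x) E"
            by (rule L2_set_mult_ineq)
          also have "\<dots> \<le> norm v * Rr x"
          proof (rule mult_mono)
            have "(\<Sum>e\<in>E. (inner v e)\<^sup>2) \<le> (norm v)\<^sup>2" by (rule bessel[OF E(3) E(1)])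
            then have "sqrt (\<Sum>e\<in>E. (inner v e)\<^sup>2) \<le> sqrt ((norm v)\<^sup>2)" by (rule real_sqrt_le_mono)
            then show "L2_set (\<lambda>e. inner v e) E \<le> norm v"
              unfolding L2_set_def by simp
            show "L2_set (\<lambda>e. W e x) E \<le> Rr x" unfolding L2_set_def Rr_def by simp
          qed (auto simp: Rnn)
          finally show ?thesis .
        qed
        show "(SUP p\<in>S. ennreal \<bar>W (fst p) x - W (snd p) x\<bar>) \<le> ennreal (2 * Q x + \<delta> * Rr x)"
        proof (rule SUP_least, rule ennreal_leI)
          fix p assume p: "p \<in> S"
          have f: "fst p \<in> Y" and g: "snd p \<in> Y" using p unfolding Y_def by auto
          have nd: "norm (fst p - snd p) \<le> \<delta>" using p S by auto
          have "W (fst p) x - W (snd p) x = T (fst p) - T (snd p) + (\<Sum>e\<in>E. inner (fst p - snd p) e * W e x)"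
            using Ty[OF f] Ty[OF g] by (simp add: inner_diff_left left_diff_distrib sum_subtractf)
          then have "\<bar>W (fst p) x - W (snd p) x\<bar> \<le> \<bar>T (fst p)\<bar> + \<bar>T (snd p)\<bar> + norm (fst p - snd p) * Rr x"
            using Eb[of "fst p - snd p"] by linarith
          also have "\<dots> \<le> Q x + Q x + \<delta> * Rr x"
            using Tb[OF f] Tb[OF g] nd Rnn[of x] by (intro add_mono mult_right_mono) auto
          finally show "\<bar>W (fst p) x - W (snd p) x\<bar> \<le> 2 * Q x + \<delta> * Rr x" by simp
        qed
      qed
      have "(\<integral>\<^sup>+x. (SUP p\<in>S. ennreal \<bar>W (fst p) x - W (snd p) x\<bar>) \<partial>M) \<le> (\<integral>\<^sup>+x. ennreal (2 * Q x + \<delta> * Rr x) \<partial>M)"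
        by (rule nn_integral_mono_AE[OF pw])
      also have "\<dots> = (\<integral>\<^sup>+x. 2 * ennreal (Q x) + ennreal \<delta> * ennreal (Rr x) \<partial>M)"
      proof (intro nn_integral_cong)
        fix x
        have "ennreal (2 * Q x + \<delta> * Rr x) = ennreal (2 * Q x) + ennreal (\<delta> * Rr x)"
          using Qnn[of x] Rnn[of x] d by (intro ennreal_plus) auto
        also have "ennreal (2 * Q x) = ennreal 2 * ennreal (Q x)" using Qnn[of x] by (intro ennreal_mult) auto
        also have "ennreal (\<delta> * Rr x) = ennreal \<delta> * ennreal (Rr x)" using Rnn[of x] d by (intro ennreal_mult) auto
        finally show "ennreal (2 * Q x + \<delta> * Rr x) = 2 * ennreal (Q x) + ennreal \<delta> * ennreal (Rr x)" by simp
      qed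
      also have "\<dots> = 2 * (\<integral>\<^sup>+x. ennreal (Q x) \<partial>M) + ennreal \<delta> * (\<integral>\<^sup>+x. ennreal (Rr x) \<partial>M)"
        by (simp add: nn_integral_add nn_integral_cmult)
      also have "\<dots> \<le> 2 * modulus M W F \<epsilon> + ennreal \<delta> * ennreal (sqrt (card C))"
      proof (intro add_mono mult_left_mono)
        have "(\<integral>\<^sup>+x. ennreal (Q x) \<partial>M) \<le> (\<integral>\<^sup>+x. ennreal (Max ((\<lambda>z. \<bar>W (a z + b z) x\<bar>) ` F0)) \<partial>M)"
          unfolding Q_def by (rule Q_bound[OF F0(1) F0ne orth])
        also have "\<dots> = (\<integral>\<^sup>+x. ennreal (Max ((\<lambda>z. \<bar>W (z - pz z) x\<bar>) ` F0)) \<partial>M)"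
          by (simp add: ab)
        also have "\<dots> \<le> modulus M W F \<epsilon>"
          by (rule mod_lower[OF F0(1) F0ne F0(2)]) (use pz F0(2) C(2) in auto)
        finally show "(\<integral>\<^sup>+x. ennreal (Q x) \<partial>M) \<le> modulus M W F \<epsilon>" .
        have "(\<integral>\<^sup>+x. ennreal (Rr x) \<partial>M) \<le> ennreal (sqrt (card E))"
          unfolding Rr_def by (rule R_bound[OF E(1) E(3)])
        also have "\<dots> \<le> ennreal (sqrt (card C))" using E(2) by (intro ennreal_leI) simp
        finally show "(\<integral>\<^sup>+x. ennreal (Rr x) \<partial>M) \<le> ennreal (sqrt (card C))" .
      qed auto
      finally show ?thesis .
    qed
  qed
qed

end

theorem theorem1:
  fixes M :: "'a measure"
    and W :: "'h::{real_inner, complete_space} \<Rightarrow> 'a \<Rightarrow> real"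
    and F :: "'h set"
    and \<delta> :: real
  assumes "prob_space M"
    and "isonormal M W"
    and "\<delta> \<ge> 0"
  shows "modulus M W (convex hull F) \<delta>
           \<le> (INF \<epsilon>\<in>{0<..}. 2 * modulus M W F \<epsilon> + ennreal \<delta> * ennsqrt (covering_number F \<epsilon>))"
proof -
  interpret iso M W by (rule iso.intro[OF assms(1) assms(2)])
  show ?thesis
  proof (cases "\<delta> = 0")
    case True
    have "modulus M W (convex hull F) \<delta> = 0"
      unfolding modulus_def
    proof (rule antisym[OF SUP_least])
      fix S assume "S \<in> {S. finite S \<and> S \<subseteq> {(f, g). f \<in> convex hull F \<and> g \<in> convex hull F \<and> norm (f - g) \<le> \<delta>}}"
      then have S: "S \<subseteq> {(f, g). f \<in> convex hull F \<and> g \<in> convex hull F \<and> norm (f - g) \<le> \<delta>}" by simp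
      have "(SUP p\<in>S. ennreal \<bar>W (fst p) x - W (snd p) x\<bar>) = 0" for x
        using S True by (intro antisym SUP_least) auto
      then show "(\<integral>\<^sup>+x. (SUP p\<in>S. ennreal \<bar>W (fst p) x - W (snd p) x\<bar>) \<partial>M) \<le> 0" by simp
    qed simp
    then show ?thesis by simp
  next
    case False
    then have dpos: "\<delta> > 0" using assms(3) by simp
    show ?thesis
    proof (rule INF_greatest)
      fix \<epsilon> :: real assume "\<epsilon> \<in> {0<..}"
      define K where "K = {C. finite C \<and> C \<subseteq> F \<and> F \<subseteq> (\<Union>c\<in>C. cball c \<epsilon>)}"
      show "modulus M W (convex hull F) \<delta> \<le> 2 * modulus M W F \<epsilon> + ennreal \<delta> * ennsqrt (covering_number F \<epsilon>)"
      proof (cases "K = {}")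
        case True
        then have "covering_number F \<epsilon> = \<infinity>" unfolding covering_number_def K_def by simp
        then have "ennreal \<delta> * ennsqrt (covering_number F \<epsilon>) = \<infinity>"
          using dpos by (simp add: ennsqrt_def ennreal_mult_top)
        then show ?thesis by simp
      next
        case False
        define m where "m = (LEAST m. \<exists>C\<in>K. card C = m)"
        have "\<exists>C\<in>K. card C = m" unfolding m_def by (rule LeastI_ex) (use False in blast)
        then obtain C0 where C0: "C0 \<in> K" "card C0 = m" by blast
        have cn: "covering_number F \<epsilon> = of_nat m"
        proof (rule antisym)
          show "covering_number F \<epsilon> \<le> of_nat m"
          proof -
            have "C0 \<in> {C. finite C \<and> C \<subseteq> F \<and> F \<subseteq> (\<Union>c\<in>C. cball c \<epsilon>)}" using C0(1) unfolding K_def .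
            from INF_lower[OF this, of "\<lambda>C. of_nat (card C)"] show ?thesis
              unfolding covering_number_def C0(2) .
          qed
          show "of_nat m \<le> covering_number F \<epsilon>"
            unfolding covering_number_def
          proof (rule INF_greatest)
            fix C assume "C \<in> {C. finite C \<and> C \<subseteq> F \<and> F \<subseteq> (\<Union>c\<in>C. cball c \<epsilon>)}"
            then have "m \<le> card C" unfolding m_def K_def by (intro Least_le) auto
            then show "of_nat m \<le> (of_nat (card C) :: ennreal)" by simp
          qed
        qed
        have es: "ennsqrt (covering_number F \<epsilon>) = ennreal (sqrt (card C0))"
          unfolding cn ennsqrt_def C0(2) by simp
        show ?thesis unfolding es
          using main_bound[OF assms(3), of C0 F \<epsilon>] C0(1) unfolding K_def by auto
      qed
    qed
  qed
qed


end
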